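(* Let $\mathrm{Cir}_9$ be the graph with vertex set $\{1,\dots,9\}$ whose maximal stable sets are exactly $\{1,2,3\},\{4,5,6\},\{7,8,9\},\{1,4,7\},\{3,6,9\}$ (so two distinct vertices are non-adjacent iff they lie together in one of these sets). Then $\mathrm{Cir}_9$ is triangle but not $\cup$-equistable.
   Context: A graph $G$ is triangle if for every maximal stable set $S$ of $G$ and every edge $uv$ of $G$ with $u,v\notin S$, there is $s\in S$ adjacent to both $u$ and $v$. A graph $G=(V,E)$ is equistable if there is $\varphi:V\to\mathbb R_+$ such that for all $S\subseteq V$, $S$ is a maximal stable set iff $\sum_{v\in S}\varphi(v)=1$. A graph is $\cup$-equistable if it or its complement is equistable. *)

theory Defs
  imports Complex_Main
begin

text \<open>Only the part of the relation on the vertex set matters; well-formedness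
  (symmetric, irreflexive, vertices in V) is captured by simple_graph.\<close>

type_synonym 'a graph = "'a set \<times> ('a \<Rightarrow> 'a \<Rightarrow> bool)"

definition verts :: "'a graph \<Rightarrow> 'a set" where "verts G = fst G"
definition adj :: "'a graph \<Rightarrow> 'a \<Rightarrow> 'a \<Rightarrow> bool" where "adj G = snd G"

definition simple_graph :: "'a graph \<Rightarrow> bool" where
  "simple_graph G \<longleftrightarrow> finite (verts G) \<and>
     (\<forall>u v. adj G u v \<longrightarrow> u \<in> verts G \<and> v \<in> verts G \<and> u \<noteq> v \<and> adj G v u)"

definition stable_set :: "'a graph \<Rightarrow> 'a set \<Rightarrow> bool" where
  "stable_set G S \<longleftrightarrow> S \<subseteq> verts G \<and> (\<forall>u\<in>S. \<forall>v\<in>S. \<not> adj G u v)"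

definition maximal_stable_set :: "'a graph \<Rightarrow> 'a set \<Rightarrow> bool" where
  "maximal_stable_set G S \<longleftrightarrow> stable_set G S \<and>
     (\<forall>T. stable_set G T \<and> S \<subseteq> T \<longrightarrow> T = S)"

definition triangle_graph :: "'a graph \<Rightarrow> bool" where
  "triangle_graph G \<longleftrightarrow> (\<forall>S. maximal_stable_set G S \<longrightarrow>
     (\<forall>u v. adj G u v \<and> u \<notin> S \<and> v \<notin> S \<longrightarrow> (\<exists>s\<in>S. adj G s u \<and> adj G s v)))"

definition equistable :: "'a graph \<Rightarrow> bool" where
  "equistable G \<longleftrightarrow> (\<exists>\<phi> :: 'a \<Rightarrow> real. (\<forall>v\<in>verts G. \<phi> v \<ge> 0) \<and>
     (\<forall>S. S \<subseteq> verts G \<longrightarrow> (maximal_stable_set G S \<longleftrightarrow> (\<Sum>v\<in>S. \<phi> v) = 1)))"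

definition complement :: "'a graph \<Rightarrow> 'a graph" where
  "complement G = (verts G, \<lambda>u v. u \<in> verts G \<and> v \<in> verts G \<and> u \<noteq> v \<and> \<not> adj G u v)"

definition cup_equistable :: "'a graph \<Rightarrow> bool" where
  "cup_equistable G \<longleftrightarrow> equistable G \<or> equistable (complement G)"

definition Cir9_blocks :: "nat set set" where
  "Cir9_blocks = {{1,2,3},{4,5,6},{7,8,9},{1,4,7},{3,6,9}}"

definition Cir9 :: "nat graph" where
  "Cir9 = ({1..9}, \<lambda>u v. u \<in> {1..9} \<and> v \<in> {1..9} \<and> u \<noteq> v \<and>
                         \<not> (\<exists>B\<in>Cir9_blocks. u \<in> B \<and> v \<in> B))"

end

theory Submission
  imports Defs
begin

lemma V9: "{1..9::nat} = {1,2,3,4,5,6,7,8,9}" by auto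

lemma vC[simp]: "verts Cir9 = {1,2,3,4,5,6,7,8,9}"
  unfolding verts_def Cir9_def V9 fst_conv by (rule refl)

lemma aC[simp]: "adj Cir9 u v = (u \<in> {1,2,3,4,5,6,7,8,9} \<and> v \<in> {1,2,3,4,5,6,7,8,9} \<and> u \<noteq> v \<and>
   \<not> (\<exists>B\<in>{{1,2,3},{4,5,6},{7,8,9},{1,4,7},{3,6,9::nat}}. u \<in> B \<and> v \<in> B))"
  unfolding adj_def Cir9_def V9 Cir9_blocks_def snd_conv by (rule refl)

lemma vCC[simp]: "verts (complement G) = verts G"
  by (simp add: complement_def verts_def)

lemma aCC[simp]: "adj (complement G) u v = (u \<in> verts G \<and> v \<in> verts G \<and> u \<noteq> v \<and> \<not> adj G u v)"
  by (simp add: complement_def adj_def verts_def)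

lemma max_intro:
  assumes "stable_set G S" "\<forall>x\<in>verts G. x \<notin> S \<longrightarrow> (\<exists>s\<in>S. adj G x s)"
  shows "maximal_stable_set G S"
  using assms unfolding maximal_stable_set_def stable_set_def by blast

lemma stable_sub:
  assumes "S \<subseteq> {1..9}" "\<forall>u\<in>S. \<forall>v\<in>S. \<not> adj Cir9 u v"
  shows "S \<subseteq> {1,2,3} \<or> S \<subseteq> {4,5,6} \<or> S \<subseteq> {7,8,9} \<or> S \<subseteq> {1,4,7} \<or> S \<subseteq> {3,6,9}"
proof -
  have h: "\<And>u v. u\<in>S \<Longrightarrow> v\<in>S \<Longrightarrow> \<not> adj Cir9 u v" using assms(2) by blast
  have m: "\<And>x. x \<in> S \<Longrightarrow> x=1\<or>x=2\<or>x=3\<or>x=4\<or>x=5\<or>x=6\<or>x=7\<or>x=8\<or>x=9"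
    using assms(1) by auto
  have n1: "\<not>(1\<in>S \<and> 5\<in>S)" by (rule notI, erule conjE, drule (1) h, simp)
  have n2: "\<not>(1\<in>S \<and> 6\<in>S)" by (rule notI, erule conjE, drule (1) h, simp)
  have n3: "\<not>(1\<in>S \<and> 8\<in>S)" by (rule notI, erule conjE, drule (1) h, simp)
  have n4: "\<not>(1\<in>S \<and> 9\<in>S)" by (rule notI, erule conjE, drule (1) h, simp)
  have n5: "\<not>(2\<in>S \<and> 4\<in>S)" by (rule notI, erule conjE, drule (1) h, simp)
  have n6: "\<not>(2\<in>S \<and> 5\<in>S)" by (rule notI, erule conjE, drule (1) h, simp)
  have n7: "\<not>(2\<in>S \<and> 6\<in>S)" by (rule notI, erule conjE, drule (1) h, simp)
  have n8: "\<not>(2\<in>S \<and> 7\<in>S)" by (rule notI, erule conjE, drule (1) h, simp)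
  have n9: "\<not>(2\<in>S \<and> 8\<in>S)" by (rule notI, erule conjE, drule (1) h, simp)
  have n10: "\<not>(2\<in>S \<and> 9\<in>S)" by (rule notI, erule conjE, drule (1) h, simp)
  have n11: "\<not>(3\<in>S \<and> 4\<in>S)" by (rule notI, erule conjE, drule (1) h, simp)
  have n12: "\<not>(3\<in>S \<and> 5\<in>S)" by (rule notI, erule conjE, drule (1) h, simp)
  have n13: "\<not>(3\<in>S \<and> 7\<in>S)" by (rule notI, erule conjE, drule (1) h, simp)
  have n14: "\<not>(3\<in>S \<and> 8\<in>S)" by (rule notI, erule conjE, drule (1) h, simp)
  have n15: "\<not>(4\<in>S \<and> 8\<in>S)" by (rule notI, erule conjE, drule (1) h, simp)
  have n16: "\<not>(4\<in>S \<and> 9\<in>S)" by (rule notI, erule conjE, drule (1) h, simp)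
  have n17: "\<not>(5\<in>S \<and> 7\<in>S)" by (rule notI, erule conjE, drule (1) h, simp)
  have n18: "\<not>(5\<in>S \<and> 8\<in>S)" by (rule notI, erule conjE, drule (1) h, simp)
  have n19: "\<not>(5\<in>S \<and> 9\<in>S)" by (rule notI, erule conjE, drule (1) h, simp)
  have n20: "\<not>(6\<in>S \<and> 7\<in>S)" by (rule notI, erule conjE, drule (1) h, simp)
  have n21: "\<not>(6\<in>S \<and> 8\<in>S)" by (rule notI, erule conjE, drule (1) h, simp)
  have P: "(4\<notin>S\<and>5\<notin>S\<and>6\<notin>S\<and>7\<notin>S\<and>8\<notin>S\<and>9\<notin>S) \<or> (1\<notin>S\<and>2\<notin>S\<and>3\<notin>S\<and>7\<notin>S\<and>8\<notin>S\<and>9\<notin>S)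
     \<or> (1\<notin>S\<and>2\<notin>S\<and>3\<notin>S\<and>4\<notin>S\<and>5\<notin>S\<and>6\<notin>S) \<or> (2\<notin>S\<and>3\<notin>S\<and>5\<notin>S\<and>6\<notin>S\<and>8\<notin>S\<and>9\<notin>S)
     \<or> (1\<notin>S\<and>2\<notin>S\<and>4\<notin>S\<and>5\<notin>S\<and>7\<notin>S\<and>8\<notin>S)"
    using n1 n2 n3 n4 n5 n6 n7 n8 n9 n10 n11 n12 n13 n14 n15 n16 n17 n18 n19 n20 n21 by argo
  show ?thesis using P m by blast
qed

lemma maxC: "maximal_stable_set Cir9 S \<Longrightarrow> S \<in> {{1,2,3},{4,5,6},{7,8,9},{1,4,7},{3,6,9}}"
proof -
  assume a: "maximal_stable_set Cir9 S"
  hence ss: "stable_set Cir9 S" unfolding maximal_stable_set_def by (elim conjE)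
  have st: "S \<subseteq> {1..9}" "\<forall>u\<in>S. \<forall>v\<in>S. \<not> adj Cir9 u v"
    using ss unfolding stable_set_def vC V9 by blast+
  have mx: "\<And>T. stable_set Cir9 T \<Longrightarrow> S \<subseteq> T \<Longrightarrow> T = S" using a unfolding maximal_stable_set_def by blast
  have "\<And>B. B \<in> {{1,2,3},{4,5,6},{7,8,9},{1,4,7},{3,6,9::nat}} \<Longrightarrow> stable_set Cir9 B"
    by (auto simp: stable_set_def)
  hence eq: "B \<in> {{1,2,3},{4,5,6},{7,8,9},{1,4,7},{3,6,9::nat}} \<Longrightarrow> S \<subseteq> B \<Longrightarrow> S = B" for B
    using mx by metis
  from stable_sub[OF st] show ?thesis
  proof (elim disjE)
    assume "S \<subseteq> {1,2,3}" then have "S = {1,2,3}" using eq[of "{1,2,3}"] by blast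
    then show ?thesis by simp
  next
    assume "S \<subseteq> {4,5,6}" then have "S = {4,5,6}" using eq[of "{4,5,6}"] by blast
    then show ?thesis by simp
  next
    assume "S \<subseteq> {7,8,9}" then have "S = {7,8,9}" using eq[of "{7,8,9}"] by blast
    then show ?thesis by simp
  next
    assume "S \<subseteq> {1,4,7}" then have "S = {1,4,7}" using eq[of "{1,4,7}"] by blast
    then show ?thesis by simp
  next
    assume "S \<subseteq> {3,6,9}" then have "S = {3,6,9}" using eq[of "{3,6,9}"] by blast
    then show ?thesis by simp
  qed
qed

lemma blocks_max: "B \<in> {{1,2,3},{4,5,6},{7,8,9},{1,4,7},{3,6,9::nat}} \<Longrightarrow> maximal_stable_set Cir9 B"
proof -
  have "maximal_stable_set Cir9 {1,2,3}" "maximal_stable_set Cir9 {4,5,6}" "maximal_stable_set Cir9 {7,8,9}"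
    "maximal_stable_set Cir9 {1,4,7}" "maximal_stable_set Cir9 {3,6,9}"
    by (rule max_intro; simp add: stable_set_def)+
  thus "B \<in> {{1,2,3},{4,5,6},{7,8,9},{1,4,7},{3,6,9::nat}} \<Longrightarrow> maximal_stable_set Cir9 B" by blast
qed

lemma tri_a: "adj Cir9 u v \<Longrightarrow> u \<notin> {1,2,3} \<Longrightarrow> v \<notin> {1,2,3} \<Longrightarrow> \<exists>s\<in>{1,2,3}. adj Cir9 s u \<and> adj Cir9 s v"
proof -
  assume a: "adj Cir9 u v" "u \<notin> {1,2,3}" "v \<notin> {1,2,3}"
  have "u \<in> {1,2,3,4,5,6,7,8,9::nat}" using a(1) unfolding aC by (elim conjE)
  hence u: "u=1\<or>u=2\<or>u=3\<or>u=4\<or>u=5\<or>u=6\<or>u=7\<or>u=8\<or>u=9" by simp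
  have "v \<in> {1,2,3,4,5,6,7,8,9::nat}" using a(1) unfolding aC by (elim conjE)
  hence v: "v=1\<or>v=2\<or>v=3\<or>v=4\<or>v=5\<or>v=6\<or>v=7\<or>v=8\<or>v=9" by simp
  show ?thesis using u v a by (elim disjE) simp_all
qed

lemma tri_b: "adj Cir9 u v \<Longrightarrow> u \<notin> {4,5,6} \<Longrightarrow> v \<notin> {4,5,6} \<Longrightarrow> \<exists>s\<in>{4,5,6}. adj Cir9 s u \<and> adj Cir9 s v"
proof -
  assume a: "adj Cir9 u v" "u \<notin> {4,5,6}" "v \<notin> {4,5,6}"
  have "u \<in> {1,2,3,4,5,6,7,8,9::nat}" using a(1) unfolding aC by (elim conjE)
  hence u: "u=1\<or>u=2\<or>u=3\<or>u=4\<or>u=5\<or>u=6\<or>u=7\<or>u=8\<or>u=9" by simp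
  have "v \<in> {1,2,3,4,5,6,7,8,9::nat}" using a(1) unfolding aC by (elim conjE)
  hence v: "v=1\<or>v=2\<or>v=3\<or>v=4\<or>v=5\<or>v=6\<or>v=7\<or>v=8\<or>v=9" by simp
  show ?thesis using u v a by (elim disjE) simp_all
qed

lemma tri_c: "adj Cir9 u v \<Longrightarrow> u \<notin> {7,8,9} \<Longrightarrow> v \<notin> {7,8,9} \<Longrightarrow> \<exists>s\<in>{7,8,9}. adj Cir9 s u \<and> adj Cir9 s v"
proof -
  assume a: "adj Cir9 u v" "u \<notin> {7,8,9}" "v \<notin> {7,8,9}"
  have "u \<in> {1,2,3,4,5,6,7,8,9::nat}" using a(1) unfolding aC by (elim conjE)
  hence u: "u=1\<or>u=2\<or>u=3\<or>u=4\<or>u=5\<or>u=6\<or>u=7\<or>u=8\<or>u=9" by simp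
  have "v \<in> {1,2,3,4,5,6,7,8,9::nat}" using a(1) unfolding aC by (elim conjE)
  hence v: "v=1\<or>v=2\<or>v=3\<or>v=4\<or>v=5\<or>v=6\<or>v=7\<or>v=8\<or>v=9" by simp
  show ?thesis using u v a by (elim disjE) simp_all
qed

lemma tri_d: "adj Cir9 u v \<Longrightarrow> u \<notin> {1,4,7} \<Longrightarrow> v \<notin> {1,4,7} \<Longrightarrow> \<exists>s\<in>{1,4,7}. adj Cir9 s u \<and> adj Cir9 s v"
proof -
  assume a: "adj Cir9 u v" "u \<notin> {1,4,7}" "v \<notin> {1,4,7}"
  have "u \<in> {1,2,3,4,5,6,7,8,9::nat}" using a(1) unfolding aC by (elim conjE)
  hence u: "u=1\<or>u=2\<or>u=3\<or>u=4\<or>u=5\<or>u=6\<or>u=7\<or>u=8\<or>u=9" by simp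
  have "v \<in> {1,2,3,4,5,6,7,8,9::nat}" using a(1) unfolding aC by (elim conjE)
  hence v: "v=1\<or>v=2\<or>v=3\<or>v=4\<or>v=5\<or>v=6\<or>v=7\<or>v=8\<or>v=9" by simp
  show ?thesis using u v a by (elim disjE) simp_all
qed

lemma tri_e: "adj Cir9 u v \<Longrightarrow> u \<notin> {3,6,9} \<Longrightarrow> v \<notin> {3,6,9} \<Longrightarrow> \<exists>s\<in>{3,6,9}. adj Cir9 s u \<and> adj Cir9 s v"
proof -
  assume a: "adj Cir9 u v" "u \<notin> {3,6,9}" "v \<notin> {3,6,9}"
  have "u \<in> {1,2,3,4,5,6,7,8,9::nat}" using a(1) unfolding aC by (elim conjE)
  hence u: "u=1\<or>u=2\<or>u=3\<or>u=4\<or>u=5\<or>u=6\<or>u=7\<or>u=8\<or>u=9" by simp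
  have "v \<in> {1,2,3,4,5,6,7,8,9::nat}" using a(1) unfolding aC by (elim conjE)
  hence v: "v=1\<or>v=2\<or>v=3\<or>v=4\<or>v=5\<or>v=6\<or>v=7\<or>v=8\<or>v=9" by simp
  show ?thesis using u v a by (elim disjE) simp_all
qed

theorem proposition41:
  shows "simple_graph Cir9 \<and> triangle_graph Cir9 \<and> \<not> cup_equistable Cir9"
proof (intro conjI)
  show "simple_graph Cir9" by (auto simp: simple_graph_def)
  show "triangle_graph Cir9"
    unfolding triangle_graph_def
  proof (intro allI impI)
    fix S u v assume m: "maximal_stable_set Cir9 S" and a0: "adj Cir9 u v \<and> u \<notin> S \<and> v \<notin> S"
    have a: "adj Cir9 u v" "u \<notin> S" "v \<notin> S" using a0 by blast+
    have "S \<in> {{1,2,3},{4,5,6},{7,8,9},{1,4,7},{3,6,9}}" using maxC[OF m] .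
    then have S: "S = {1,2,3} \<or> S = {4,5,6} \<or> S = {7,8,9} \<or> S = {1,4,7} \<or> S = {3,6,9} \<or> False"
      by (simp only: insert_iff empty_iff)
    from S show "\<exists>s\<in>S. adj Cir9 s u \<and> adj Cir9 s v"
    proof (elim disjE)
      assume e: "S = {1,2,3}" show ?thesis using tri_a[OF a(1) a(2)[unfolded e] a(3)[unfolded e]] unfolding e .
    next
      assume e: "S = {4,5,6}" show ?thesis using tri_b[OF a(1) a(2)[unfolded e] a(3)[unfolded e]] unfolding e .
    next
      assume e: "S = {7,8,9}" show ?thesis using tri_c[OF a(1) a(2)[unfolded e] a(3)[unfolded e]] unfolding e .
    next
      assume e: "S = {1,4,7}" show ?thesis using tri_d[OF a(1) a(2)[unfolded e] a(3)[unfolded e]] unfolding e .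
    next
      assume e: "S = {3,6,9}" show ?thesis using tri_e[OF a(1) a(2)[unfolded e] a(3)[unfolded e]] unfolding e .
    next
      assume False then show ?thesis ..
    qed
  qed
  show "\<not> cup_equistable Cir9"
    unfolding cup_equistable_def
  proof
    assume "equistable Cir9 \<or> equistable (complement Cir9)"
    then show False
    proof
      assume "equistable Cir9"
      then obtain \<phi> :: "nat \<Rightarrow> real" where
        p: "\<forall>S. S \<subseteq> verts Cir9 \<longrightarrow> (maximal_stable_set Cir9 S \<longleftrightarrow> (\<Sum>v\<in>S. \<phi> v) = 1)"
        unfolding equistable_def by blast
      have "(\<Sum>v\<in>{1,2,3}. \<phi> v) = 1" using p[rule_format, of "{1,2,3}"] blocks_max[of "{1,2,3}"] by simp
      moreover have "(\<Sum>v\<in>{4,5,6}. \<phi> v) = 1" using p[rule_format, of "{4,5,6}"] blocks_max[of "{4,5,6}"] by simp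
      moreover have "(\<Sum>v\<in>{7,8,9}. \<phi> v) = 1" using p[rule_format, of "{7,8,9}"] blocks_max[of "{7,8,9}"] by simp
      moreover have "(\<Sum>v\<in>{1,4,7}. \<phi> v) = 1" using p[rule_format, of "{1,4,7}"] blocks_max[of "{1,4,7}"] by simp
      moreover have "(\<Sum>v\<in>{3,6,9}. \<phi> v) = 1" using p[rule_format, of "{3,6,9}"] blocks_max[of "{3,6,9}"] by simp
      ultimately have "(\<Sum>v\<in>{2,5,8}. \<phi> v) = 1" by simp
      moreover have "\<not> maximal_stable_set Cir9 {2,5,8}"
        by (auto simp: maximal_stable_set_def stable_set_def)
      ultimately show False using p[rule_format, of "{1,4,8}"] p[rule_format, of "{2,5,8}"] by simp
    next
      assume "equistable (complement Cir9)"
      then obtain \<phi> :: "nat \<Rightarrow> real" where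
        p: "\<forall>S. S \<subseteq> verts Cir9 \<longrightarrow> (maximal_stable_set (complement Cir9) S \<longleftrightarrow> (\<Sum>v\<in>S. \<phi> v) = 1)"
        unfolding equistable_def by auto
      have "maximal_stable_set (complement Cir9) {1,5,8}"
        by (rule max_intro) (simp_all add: stable_set_def)
      hence "(\<Sum>v\<in>{1,5,8}. \<phi> v) = 1" using p[rule_format, of "{1,5,8}"] by simp
      moreover have "maximal_stable_set (complement Cir9) {2,4,8}"
        by (rule max_intro) (simp_all add: stable_set_def)
      hence "(\<Sum>v\<in>{2,4,8}. \<phi> v) = 1" using p[rule_format, of "{2,4,8}"] by simp
      moreover have "maximal_stable_set (complement Cir9) {2,5,8}"
        by (rule max_intro) (simp_all add: stable_set_def)
      hence "(\<Sum>v\<in>{2,5,8}. \<phi> v) = 1" using p[rule_format, of "{2,5,8}"] by simp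
      ultimately have "(\<Sum>v\<in>{1,4,8}. \<phi> v) = 1" by simp
      moreover have "\<not> maximal_stable_set (complement Cir9) {1,4,8}"
        by (auto simp: maximal_stable_set_def stable_set_def)
      ultimately show False using p[rule_format, of "{1,4,8}"] p[rule_format, of "{2,5,8}"] by simp
    qed
  qed
qed

end
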